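(* Let $\langle P,\wedge,\vee,0,1,\circ\rangle$ be a universale such that $\circ$ is idempotent ($a\circ a=a$ for all $a\in P$) and the identity element of the monoid $\langle P,\circ\rangle$ equals the least element $0$ of the lattice. Then $\langle P,\wedge,\vee,0,1\rangle$ is a globale.
   Context: A universale is a structure $\langle P,\wedge,\vee,0,1,\circ\rangle$ such that: (1) $\langle P,\wedge,\vee\rangle$ is a complete lattice with least element $0$ and greatest element $1$; (2) $\langle P,\circ\rangle$ is a monoid with some identity element $0'$; (3) for every $b\in P$ and every $T\subseteq P$, $b\circ\bigwedge T=\bigwedge\{b\circ t\mid t\in T\}$ and $(\bigwedge T)\circ b=\bigwedge\{t\circ b\mid t\in T\}$. A globale is a complete lattice $\langle L,\wedge,\vee,0,1\rangle$ such that for all $w\in L$ and all $Z\subseteq L$, $w\vee\bigwedge Z=\bigwedge\{w\vee z\mid z\in Z\}$. *)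

theory Defs
  imports Main
begin

text \<open>A universale: the complete lattice structure is that of the type class
complete_lattice (bot = 0, top = 1, Inf = big meet); mult is the monoid operation (named mult).\<close>

definition universale :: "('a::complete_lattice \<Rightarrow> 'a \<Rightarrow> 'a) \<Rightarrow> bool" where
  "universale mult \<longleftrightarrow>
     (\<forall>a b c. mult (mult a b) c = mult a (mult b c)) \<and>
     (\<exists>e. \<forall>a. mult e a = a \<and> mult a e = a) \<and>
     (\<forall>b T. mult b (Inf T) = Inf ((\<lambda>t. mult b t) ` T) \<and>
            mult (Inf T) b = Inf ((\<lambda>t. mult t b) ` T))"

definition globale :: "'a::complete_lattice itself \<Rightarrow> bool" where
  "globale _ \<longleftrightarrow> (\<forall>(w::'a) Z. sup w (Inf Z) = Inf ((\<lambda>z. sup w z) ` Z))"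

end

theory Submission
  imports Defs
begin

theorem mainTheorem5:
  fixes mult :: "'a::complete_lattice \<Rightarrow> 'a \<Rightarrow> 'a"
  assumes "universale mult"
    and "\<forall>a. mult a a = a"
    and "\<forall>a. mult bot a = a \<and> mult a bot = a"
  shows "globale TYPE('a)"
proof -
  have D1: "\<And>b T. mult b (Inf T) = Inf ((\<lambda>t. mult b t) ` T)"
   and D2: "\<And>b T. mult (Inf T) b = Inf ((\<lambda>t. mult t b) ` T)"
    using assms(1) unfolding universale_def by auto
  have M1: "mult c a \<le> mult c b" if "a \<le> b" for a b c
  proof -
    have "Inf {a, b} = a" using that by (simp add: inf_absorb1)
    hence "mult c a = Inf {mult c a, mult c b}" using D1[of c "{a,b}"] by simp
    thus ?thesis by (metis Inf_lower insertI1 insert_commute)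
  qed
  have M2: "mult a c \<le> mult b c" if "a \<le> b" for a b c
  proof -
    have "Inf {a, b} = a" using that by (simp add: inf_absorb1)
    hence "mult a c = Inf {mult a c, mult b c}" using D2[of "{a,b}" c] by simp
    thus ?thesis by (metis Inf_lower insertI1 insert_commute)
  qed
  have S: "mult a b = sup a b" for a b
  proof (rule antisym)
    have "mult a b \<le> mult (sup a b) b" by (rule M2) simp
    also have "\<dots> \<le> mult (sup a b) (sup a b)" by (rule M1) simp
    finally show "mult a b \<le> sup a b" using assms(2) by simp
    have "a \<le> mult a b" using M1[of bot b a] assms(3) by simp
    moreover have "b \<le> mult a b" using M2[of bot a b] assms(3) by simp
    ultimately show "sup a b \<le> mult a b" by simp
  qed
  show ?thesis unfolding globale_def using D1 S by simp
qed

end
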